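(* Let $\mathcal D$ be a non-trivial $2$-$(k^{2},k,\lambda)$ design with $\lambda\mid k$ and $G$ a flag-transitive automorphism group which is almost simple with socle $X$. Then for every point $x$ and every point $y\neq x$, the integer $\frac{k+1}{\gcd(k+1,|\mathrm{Out}(X)|)}$ divides $|y^{X_x}|$, and hence divides $|X_x|$.
   Context: A $2$-$(v,k,\lambda)$ design: $v$ points, blocks are $k$-subsets, every two distinct points lie in exactly $\lambda$ blocks; non-trivial: $2<k<v$. Flag-transitive: transitive on incident point–block pairs. $G$ almost simple with socle $X$ means $X\trianglelefteq G\le\mathrm{Aut}(X)$ with $X$ non-abelian simple. $X_x$ is the stabilizer in $X$ of the point $x$, $y^{X_x}$ the orbit of $y$ under $X_x$, $\mathrm{Out}(X)=\mathrm{Aut}(X)/\mathrm{Inn}(X)$. *)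

theory Defs
  imports "HOL-Algebra.Algebra"
begin

definition design_2 :: "'a set \<Rightarrow> 'a set set \<Rightarrow> nat \<Rightarrow> nat \<Rightarrow> nat \<Rightarrow> bool" where
  "design_2 P B v k lam \<longleftrightarrow>
     finite P \<and> card P = v \<and>
     (\<forall>b\<in>B. b \<subseteq> P \<and> card b = k) \<and>
     (\<forall>x\<in>P. \<forall>y\<in>P. x \<noteq> y \<longrightarrow> card {b\<in>B. x \<in> b \<and> y \<in> b} = lam)"

definition nontrivial_design_2 :: "'a set \<Rightarrow> 'a set set \<Rightarrow> nat \<Rightarrow> nat \<Rightarrow> nat \<Rightarrow> bool" where
  "nontrivial_design_2 P B v k lam \<longleftrightarrow> design_2 P B v k lam \<and> 2 < k \<and> k < v"

definition design_aut_group :: "'a set \<Rightarrow> 'a set set \<Rightarrow> ('a \<Rightarrow> 'a) set \<Rightarrow> bool" where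
  "design_aut_group P B G \<longleftrightarrow>
     subgroup G (BijGroup P) \<and> (\<forall>g\<in>G. \<forall>b\<in>B. g ` b \<in> B)"

definition flag_transitive :: "'a set \<Rightarrow> 'a set set \<Rightarrow> ('a \<Rightarrow> 'a) set \<Rightarrow> bool" where
  "flag_transitive P B G \<longleftrightarrow>
     (\<forall>x b y c. x \<in> P \<and> b \<in> B \<and> x \<in> b \<and> y \<in> P \<and> c \<in> B \<and> y \<in> c \<longrightarrow>
        (\<exists>g\<in>G. g x = y \<and> g ` b = c))"

definition inn_auts :: "('g, 'c) monoid_scheme \<Rightarrow> ('g \<Rightarrow> 'g) set" where
  "inn_auts S = (\<lambda>g. restrict (\<lambda>y. monoid.mult S (monoid.mult S g y) (m_inv S g)) (carrier S)) ` carrier S"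

definition out_order :: "('g, 'c) monoid_scheme \<Rightarrow> nat" where
  "out_order S = order (AutoGroup S) div card (inn_auts S)"

text \<open>G almost simple with socle S: S is a non-abelian simple normal subgroup of G and
  G acts faithfully on S by conjugation (i.e. S \<unlhd> G \<le> Aut(S), with S identified with Inn(S)).\<close>
definition almost_simple_with_socle :: "('g, 'c) monoid_scheme \<Rightarrow> 'g set \<Rightarrow> bool" where
  "almost_simple_with_socle G S \<longleftrightarrow>
     group G \<and> S \<lhd> G \<and>
     simple_group (G\<lparr>carrier := S\<rparr>) \<and> \<not> comm_group (G\<lparr>carrier := S\<rparr>) \<and>
     (\<forall>g\<in>carrier G. (\<forall>h\<in>S. monoid.mult G (monoid.mult G g h) (m_inv G g) = h) \<longrightarrow> g = monoid.one G)"

end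

theory Submission
  imports Defs
begin

lemma BP_mult: "f \<in> Bij P \<Longrightarrow> g \<in> Bij P \<Longrightarrow> f \<otimes>\<^bsub>BijGroup P\<^esub> g = compose P f g"
  by (simp add: BijGroup_def)

lemma BP_carrier: "carrier (BijGroup P) = Bij P"
  by (simp add: BijGroup_def)

lemma BP_one: "\<one>\<^bsub>BijGroup P\<^esub> = (\<lambda>x\<in>P. x)"
  by (simp add: BijGroup_def)

lemma os_perm:
  assumes H: "subgroup H (BijGroup P)" and x: "x \<in> P"
  shows "card ((\<lambda>h. h x) ` H) * card {h\<in>H. h x = x} = card H"
proof -
  have gB: "group (BijGroup P)" by (rule group_BijGroup)
  have gH: "group (BijGroup P\<lparr>carrier := H\<rparr>)"
    using subgroup.subgroup_is_group[OF H gB] .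
  have "group_hom (BijGroup P\<lparr>carrier := H\<rparr>) (BijGroup P) (\<lambda>h. h)"
    unfolding group_hom_def group_hom_axioms_def
    using gH gB subgroup.subset[OF H] by (auto simp: hom_def)
  then interpret group_action "BijGroup P\<lparr>carrier := H\<rparr>" P "\<lambda>h. h"
    by (simp add: group_action_def)
  have "card (orbit (BijGroup P\<lparr>carrier := H\<rparr>) (\<lambda>h. h) x) * card (stabilizer (BijGroup P\<lparr>carrier := H\<rparr>) (\<lambda>h. h) x) = order (BijGroup P\<lparr>carrier := H\<rparr>)"
    by (rule orbit_stabilizer_theorem[OF x])
  moreover have "orbit (BijGroup P\<lparr>carrier := H\<rparr>) (\<lambda>h. h) x = (\<lambda>h. h x) ` H"
    by (auto simp: orbit_def)
  ultimately show ?thesis by (simp add: stabilizer_def order_def)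
qed

lemma lagr_perm:
  assumes "subgroup H (BijGroup P)" "subgroup K (BijGroup P)" "H \<subseteq> K"
  shows "card H dvd card K"
proof -
  interpret B: group "BijGroup P" by (rule group_BijGroup)
  have "subgroup H (BijGroup P\<lparr>carrier := K\<rparr>)"
    using B.subgroup_incl assms by blast
  moreover have "group (BijGroup P\<lparr>carrier := K\<rparr>)"
    using subgroup.subgroup_is_group[OF assms(2) B.is_group] .
  ultimately have "card (rcosets\<^bsub>BijGroup P\<lparr>carrier := K\<rparr>\<^esub> H) * card H = order (BijGroup P\<lparr>carrier := K\<rparr>)"
    using group.lagrange by blast
  then have "card (rcosets\<^bsub>BijGroup P\<lparr>carrier := K\<rparr>\<^esub> H) * card H = card K" by (simp add: order_def)
  then show ?thesis by (metis dvd_triv_right)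
qed

lemma stab_subgroup:
  assumes H: "subgroup H (BijGroup P)" and x: "x \<in> P"
  shows "subgroup {h\<in>H. h x = x} (BijGroup P)"
proof -
  interpret B: group "BijGroup P" by (rule group_BijGroup)
  show ?thesis
  proof (rule B.subgroupI)
    show "{h \<in> H. h x = x} \<subseteq> carrier (BijGroup P)" using subgroup.subset[OF H] by auto
    show "{h \<in> H. h x = x} \<noteq> {}"
      using subgroup.one_closed[OF H] x by (auto simp: BP_one)
  next
    fix a assume a: "a \<in> {h \<in> H. h x = x}"
    then have aH: "a \<in> H" and ax: "a x = x" by auto
    have ac: "a \<in> carrier (BijGroup P)" using aH subgroup.subset[OF H] by auto
    have ic: "inv\<^bsub>BijGroup P\<^esub> a \<in> carrier (BijGroup P)" using ac by simp
    have "inv\<^bsub>BijGroup P\<^esub> a \<otimes>\<^bsub>BijGroup P\<^esub> a = \<one>\<^bsub>BijGroup P\<^esub>" using ac by simp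
    then have "compose P (inv\<^bsub>BijGroup P\<^esub> a) a x = x"
      using ac ic x by (simp add: BP_mult BP_carrier BP_one)
    then have "(inv\<^bsub>BijGroup P\<^esub> a) x = x" using x ax by (simp add: compose_def)
    then show "inv\<^bsub>BijGroup P\<^esub> a \<in> {h \<in> H. h x = x}"
      using subgroup.m_inv_closed[OF H aH] by auto
  next
    fix a b assume a: "a \<in> {h \<in> H. h x = x}" and b: "b \<in> {h \<in> H. h x = x}"
    then have "a \<in> carrier (BijGroup P)" "b \<in> carrier (BijGroup P)" using subgroup.subset[OF H] by auto
    moreover have "a \<otimes>\<^bsub>BijGroup P\<^esub> b \<in> H" using a b subgroup.m_closed[OF H] by auto
    ultimately show "a \<otimes>\<^bsub>BijGroup P\<^esub> b \<in> {h \<in> H. h x = x}"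
      using a b x by (auto simp: BP_mult BP_carrier compose_def)
  qed
qed

lemma double_count:
  assumes "finite A" "finite C"
  shows "(\<Sum>z\<in>A. card {b\<in>C. R z b}) = (\<Sum>b\<in>C. card {z\<in>A. R z b})"
proof -
  have e: "\<And>D Q. finite D \<Longrightarrow> card {d\<in>D. Q d} = (\<Sum>d\<in>D. if Q d then 1 else 0)"
    by (simp add: sum.If_cases Collect_conj_eq)
  have "(\<Sum>z\<in>A. card {b\<in>C. R z b}) = (\<Sum>z\<in>A. \<Sum>b\<in>C. if R z b then 1 else 0)"
    using assms by (simp add: e)
  also have "\<dots> = (\<Sum>b\<in>C. \<Sum>z\<in>A. if R z b then 1 else 0)" by (rule sum.swap)
  also have "\<dots> = (\<Sum>b\<in>C. card {z\<in>A. R z b})"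
    using assms by (simp add: e)
  finally show ?thesis .
qed

lemma Bij_inj: "g \<in> Bij P \<Longrightarrow> inj_on g P"
  by (simp add: Bij_def bij_betw_def)

lemma Bij_img: "g \<in> Bij P \<Longrightarrow> g ` P = P"
  by (simp add: Bij_def bij_betw_def)

lemma orbit_invariant:
  assumes H: "subgroup H (BijGroup P)" and g: "g \<in> H" and y: "y \<in> P"
  shows "g ` ((\<lambda>h. h y) ` H) = (\<lambda>h. h y) ` H"
proof -
  interpret Bg: group "BijGroup P" by (rule group_BijGroup)
  have Hs: "\<And>h. h \<in> H \<Longrightarrow> h \<in> Bij P" using subgroup.subset[OF H] by (auto simp: BP_carrier)
  show ?thesis
  proof
    show "g ` (\<lambda>h. h y) ` H \<subseteq> (\<lambda>h. h y) ` H"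
    proof
      fix z assume "z \<in> g ` (\<lambda>h. h y) ` H"
      then obtain h where h: "h \<in> H" "z = g (h y)" by auto
      have "g \<otimes>\<^bsub>BijGroup P\<^esub> h \<in> H" using subgroup.m_closed[OF H g h(1)] .
      moreover have "(g \<otimes>\<^bsub>BijGroup P\<^esub> h) y = z" using h Hs g y by (simp add: BP_mult compose_def)
      ultimately show "z \<in> (\<lambda>h. h y) ` H" by (metis image_eqI)
    qed
  next
    show "(\<lambda>h. h y) ` H \<subseteq> g ` (\<lambda>h. h y) ` H"
    proof
      fix z assume "z \<in> (\<lambda>h. h y) ` H"
      then obtain h where h: "h \<in> H" "z = h y" by auto
      define i where "i = inv\<^bsub>BijGroup P\<^esub> g"
      have iH: "i \<in> H" using subgroup.m_inv_closed[OF H g] i_def by simp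
      have ihH: "i \<otimes>\<^bsub>BijGroup P\<^esub> h \<in> H" using subgroup.m_closed[OF H iH h(1)] .
      have gc: "g \<in> carrier (BijGroup P)" using Hs g by (simp add: BP_carrier)
      have "g \<otimes>\<^bsub>BijGroup P\<^esub> (i \<otimes>\<^bsub>BijGroup P\<^esub> h) = h"
      proof -
        have hc: "h \<in> carrier (BijGroup P)" using h(1) subgroup.subset[OF H] by auto
        show ?thesis unfolding i_def using gc hc by (simp add: Bg.m_assoc[symmetric])
      qed
      then have "compose P g (i \<otimes>\<^bsub>BijGroup P\<^esub> h) y = h y"
        using Hs[OF g] Hs[OF ihH] by (simp add: BP_mult)
      then have "g ((i \<otimes>\<^bsub>BijGroup P\<^esub> h) y) = h y"
        using y by (simp add: compose_eq)
      then have "z = g ((\<lambda>h. h y) (i \<otimes>\<^bsub>BijGroup P\<^esub> h))" using h(2) by simp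
      then show "z \<in> g ` (\<lambda>h. h y) ` H" using ihH by (intro image_eqI[of z g]) auto
    qed
  qed
qed

lemma design_orbit_dvd:
  assumes D: "design_2 P B (k^2) k lam" and k: "2 < k" and lam: "0 < lam"
    and x: "x \<in> P" and y: "y \<in> P" "y \<noteq> x"
    and H: "subgroup H (BijGroup P)" and Hx: "\<forall>h\<in>H. h x = x"
    and HB: "\<forall>h\<in>H. \<forall>b\<in>B. h ` b \<in> B"
    and Htr: "\<forall>b\<in>B. \<forall>c\<in>B. x \<in> b \<longrightarrow> x \<in> c \<longrightarrow> (\<exists>h\<in>H. h ` b = c)"
  shows "(k + 1) dvd card ((\<lambda>h. h y) ` H)"
proof -
  define Orb where "Orb = (\<lambda>h. h y) ` H"
  define Bx where "Bx = {b\<in>B. x \<in> b}"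
  have fP: "finite P" and cP: "card P = k^2" and bl: "\<forall>b\<in>B. b \<subseteq> P \<and> card b = k"
    and lm: "\<forall>x\<in>P. \<forall>y\<in>P. x \<noteq> y \<longrightarrow> card {b\<in>B. x \<in> b \<and> y \<in> b} = lam"
    using D by (auto simp: design_2_def)
  have fB: "finite B"
  proof -
    have "B \<subseteq> Pow P" using bl by auto
    then show ?thesis by (rule finite_subset) (simp add: fP)
  qed
  have fBx: "finite Bx" using fB by (simp add: Bx_def)
  have Hs: "\<And>h. h \<in> H \<Longrightarrow> h \<in> Bij P" using subgroup.subset[OF H] by (auto simp: BP_carrier)
  have OP: "Orb \<subseteq> P" unfolding Orb_def using Hs y Bij_img by blast
  have fO: "finite Orb" using OP fP finite_subset by blast
  have xO: "x \<notin> Orb"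
  proof
    assume "x \<in> Orb"
    then obtain h where h: "h \<in> H" "h y = x" by (auto simp: Orb_def)
    then have "h y = h x" using Hx by auto
    then show False using Bij_inj[OF Hs[OF h(1)]] x y by (auto simp: inj_on_def)
  qed
  have r1: "(\<Sum>z\<in>P-{x}. card {b\<in>Bx. z \<in> b}) = (\<Sum>b\<in>Bx. card {z\<in>P-{x}. z \<in> b})"
    using fP fBx by (intro double_count) auto
  have "(\<Sum>z\<in>P-{x}. card {b\<in>Bx. z \<in> b}) = (\<Sum>z\<in>P-{x}. lam)"
  proof (rule sum.cong)
    fix z assume z: "z \<in> P - {x}"
    have "{b\<in>Bx. z \<in> b} = {b\<in>B. x \<in> b \<and> z \<in> b}" by (auto simp: Bx_def)
    then show "card {b\<in>Bx. z \<in> b} = lam" using lm x z by auto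
  qed simp
  also have "\<dots> = (k^2 - 1) * lam" using fP cP x by simp
  finally have r2: "(\<Sum>z\<in>P-{x}. card {b\<in>Bx. z \<in> b}) = (k^2 - 1) * lam" .
  have "(\<Sum>b\<in>Bx. card {z\<in>P-{x}. z \<in> b}) = (\<Sum>b\<in>Bx. k - 1)"
  proof (rule sum.cong)
    fix b assume b: "b \<in> Bx"
    then have "{z\<in>P-{x}. z \<in> b} = b - {x}" using bl by (auto simp: Bx_def)
    moreover have "b \<subseteq> P" using b bl by (auto simp: Bx_def)
    then have "finite b" by (rule finite_subset[OF _ fP])
    ultimately show "card {z\<in>P-{x}. z \<in> b} = k - 1" using b bl by (auto simp: Bx_def)
  qed simp
  also have "\<dots> = card Bx * (k - 1)" by simp
  finally have r3: "card Bx * (k - 1) = (k^2 - 1) * lam" using r1 r2 by simp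
  have kk: "k^2 - 1 = (k - 1) * (k + 1)"
  proof -
    obtain m where "k = Suc m" using k by (cases k) auto
    then show ?thesis by (simp add: power2_eq_square algebra_simps)
  qed
  have "card Bx * (k - 1) = (lam * (k + 1)) * (k - 1)" using r3 unfolding kk by (simp only: ac_simps)
  moreover have "k - 1 \<noteq> 0" using k by simp
  ultimately have r: "card Bx = lam * (k + 1)" by simp
  have "card Bx > 0" using r lam by simp
  then have "Bx \<noteq> {}" by auto
  then obtain b0 where b0: "b0 \<in> Bx" by auto
  define c where "c = card (b0 \<inter> Orb)"
  have cc: "\<And>b. b \<in> Bx \<Longrightarrow> card {z\<in>Orb. z \<in> b} = c"
  proof -
    fix b assume b: "b \<in> Bx"
    have "\<exists>h\<in>H. h ` b0 = b" using Htr b0 b unfolding Bx_def by blast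
    then obtain h where h: "h \<in> H" "h ` b0 = b" by blast
    have hO: "h ` Orb = Orb" using orbit_invariant[OF H h(1) y(1)] by (simp add: Orb_def)
    have b0P: "b0 \<subseteq> P" using b0 bl by (auto simp: Bx_def)
    have "h ` (b0 \<inter> Orb) = h ` b0 \<inter> h ` Orb"
      using inj_on_image_Int[OF Bij_inj[OF Hs[OF h(1)]] b0P OP] .
    then have im: "h ` (b0 \<inter> Orb) = {z\<in>Orb. z \<in> b}" using h hO by auto
    have inj: "inj_on h (b0 \<inter> Orb)" using Bij_inj[OF Hs[OF h(1)]] OP by (meson inf_le2 inj_on_subset order_trans)
    have "card (h ` (b0 \<inter> Orb)) = card (b0 \<inter> Orb)" by (rule card_image[OF inj])
    then show "card {z\<in>Orb. z \<in> b} = c" unfolding c_def using im by simp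
  qed
  have t1: "(\<Sum>z\<in>Orb. card {b\<in>Bx. z \<in> b}) = (\<Sum>b\<in>Bx. card {z\<in>Orb. z \<in> b})"
    using fO fBx by (intro double_count) auto
  have "(\<Sum>z\<in>Orb. card {b\<in>Bx. z \<in> b}) = (\<Sum>z\<in>Orb. lam)"
  proof (rule sum.cong)
    fix z assume z: "z \<in> Orb"
    have "{b\<in>Bx. z \<in> b} = {b\<in>B. x \<in> b \<and> z \<in> b}" by (auto simp: Bx_def)
    moreover have "z \<noteq> x" using z xO by auto
    ultimately show "card {b\<in>Bx. z \<in> b} = lam" using lm x z OP by auto
  qed simp
  then have t2: "(\<Sum>z\<in>Orb. card {b\<in>Bx. z \<in> b}) = card Orb * lam" by simp
  have "(\<Sum>b\<in>Bx. card {z\<in>Orb. z \<in> b}) = card Bx * c" using cc by simp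
  then have "card Orb * lam = lam * (k + 1) * c" using t1 t2 r by simp
  then have "lam * card Orb = lam * ((k + 1) * c)" by (simp only: ac_simps)
  then have "card Orb = (k + 1) * c" using lam by simp
  then show ?thesis unfolding Orb_def by (metis dvd_triv_left)
qed

lemma finite_Bij: "finite P \<Longrightarrow> finite (Bij P)"
proof -
  assume f: "finite P"
  have "Bij P \<subseteq> PiE P (\<lambda>_. P)"
    by (auto simp: Bij_def PiE_def bij_betw_def)
  moreover have "finite (PiE P (\<lambda>_. P))" using f by (simp add: finite_PiE)
  ultimately show ?thesis by (rule finite_subset)
qed

lemma (in group) inv_cancel_left_nested: "x \<in> carrier G \<Longrightarrow> y \<in> carrier G \<Longrightarrow> inv x \<otimes> (x \<otimes> y) = y"
  by (simp add: m_assoc[symmetric])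

lemma (in group) cancel_inv_left_nested: "x \<in> carrier G \<Longrightarrow> y \<in> carrier G \<Longrightarrow> x \<otimes> (inv x \<otimes> y) = y"
  by (simp add: m_assoc[symmetric])

lemma socle_index_dvd_out:
  fixes P :: "'a set" and G Soc :: "('a \<Rightarrow> 'a) set"
  assumes fP: "finite P" and GB: "subgroup G (BijGroup P)"
    and N: "Soc \<lhd> (BijGroup P\<lparr>carrier := G\<rparr>)"
    and faith: "\<forall>g\<in>carrier (BijGroup P\<lparr>carrier := G\<rparr>). (\<forall>h\<in>Soc. monoid.mult (BijGroup P\<lparr>carrier := G\<rparr>) (monoid.mult (BijGroup P\<lparr>carrier := G\<rparr>) g h) (m_inv (BijGroup P\<lparr>carrier := G\<rparr>) g) = h) \<longrightarrow> g = monoid.one (BijGroup P\<lparr>carrier := G\<rparr>)"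
  shows "\<exists>t. card G = t * card Soc \<and> t dvd out_order (BijGroup P\<lparr>carrier := Soc\<rparr>)"
proof -
  interpret Bg: group "BijGroup P" by (rule group_BijGroup)
  let ?BP = "BijGroup P"
  let ?Gm = "BijGroup P\<lparr>carrier := G\<rparr>"
  let ?S = "BijGroup P\<lparr>carrier := Soc\<rparr>"
  have subSG: "subgroup Soc ?Gm" using normal_imp_subgroup[OF N] .
  have SG: "Soc \<subseteq> G" using subgroup.subset[OF subSG] by simp
  have SB: "subgroup Soc ?BP" using Bg.incl_subgroup[OF GB subSG] .
  have Gc: "\<And>g. g \<in> G \<Longrightarrow> g \<in> carrier ?BP" using subgroup.subset[OF GB] by auto
  have Sc: "\<And>g. g \<in> Soc \<Longrightarrow> g \<in> carrier ?BP" using SG Gc by auto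
  have invG: "\<And>g. g \<in> G \<Longrightarrow> inv\<^bsub>?BP\<^esub> g \<in> G" using subgroup.m_inv_closed[OF GB] by auto
  have mG: "\<And>g g'. g \<in> G \<Longrightarrow> g' \<in> G \<Longrightarrow> g \<otimes>\<^bsub>?BP\<^esub> g' \<in> G" using subgroup.m_closed[OF GB] by auto
  have nc: "\<And>g h. g \<in> G \<Longrightarrow> h \<in> Soc \<Longrightarrow> g \<otimes>\<^bsub>?BP\<^esub> h \<otimes>\<^bsub>?BP\<^esub> inv\<^bsub>?BP\<^esub> g \<in> Soc"
  proof -
    fix g h assume g: "g \<in> G" and h: "h \<in> Soc"
    have "g \<otimes>\<^bsub>?Gm\<^esub> h \<otimes>\<^bsub>?Gm\<^esub> inv\<^bsub>?Gm\<^esub> g \<in> Soc"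
      using normal.inv_op_closed2[OF N] g h by simp
    then show "g \<otimes>\<^bsub>?BP\<^esub> h \<otimes>\<^bsub>?BP\<^esub> inv\<^bsub>?BP\<^esub> g \<in> Soc"
      using Bg.m_inv_consistent[OF GB g] by simp
  qed
  have faith': "\<And>g. g \<in> G \<Longrightarrow> (\<forall>h\<in>Soc. g \<otimes>\<^bsub>?BP\<^esub> h \<otimes>\<^bsub>?BP\<^esub> inv\<^bsub>?BP\<^esub> g = h) \<Longrightarrow> g = \<one>\<^bsub>?BP\<^esub>"
  proof -
    fix g assume g: "g \<in> G" and c: "\<forall>h\<in>Soc. g \<otimes>\<^bsub>?BP\<^esub> h \<otimes>\<^bsub>?BP\<^esub> inv\<^bsub>?BP\<^esub> g = h"
    then show "g = \<one>\<^bsub>?BP\<^esub>" using faith Bg.m_inv_consistent[OF GB g] by simp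
  qed
  define \<phi> where "\<phi> g = (\<lambda>h\<in>Soc. g \<otimes>\<^bsub>?BP\<^esub> h \<otimes>\<^bsub>?BP\<^esub> inv\<^bsub>?BP\<^esub> g)" for g
  have \<phi>fun: "\<And>g. g \<in> G \<Longrightarrow> \<phi> g \<in> Soc \<rightarrow> Soc" using nc by (auto simp: \<phi>_def)
  have \<phi>comp: "\<And>g g'. g \<in> G \<Longrightarrow> g' \<in> G \<Longrightarrow> \<phi> (g \<otimes>\<^bsub>?BP\<^esub> g') = compose Soc (\<phi> g) (\<phi> g')"
  proof -
    fix g g' assume g: "g \<in> G" and g': "g' \<in> G"
    show "\<phi> (g \<otimes>\<^bsub>?BP\<^esub> g') = compose Soc (\<phi> g) (\<phi> g')"
    proof
      fix h show "\<phi> (g \<otimes>\<^bsub>?BP\<^esub> g') h = compose Soc (\<phi> g) (\<phi> g') h"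
      proof (cases "h \<in> Soc")
        case True
        have "g' \<otimes>\<^bsub>?BP\<^esub> h \<otimes>\<^bsub>?BP\<^esub> inv\<^bsub>?BP\<^esub> g' \<in> Soc" using nc g' True by blast
        then show ?thesis using True Gc[OF g] Gc[OF g'] Sc[OF True]
          by (simp add: \<phi>_def compose_def Bg.inv_mult_group Bg.m_assoc)
      next
        case False then show ?thesis by (simp add: \<phi>_def compose_def)
      qed
    qed
  qed
  have \<phi>inv: "\<And>g h. g \<in> G \<Longrightarrow> h \<in> Soc \<Longrightarrow> \<phi> (inv\<^bsub>?BP\<^esub> g) (\<phi> g h) = h"
  proof -
    fix g h assume g: "g \<in> G" and h: "h \<in> Soc"
    have "\<phi> g h \<in> Soc" using \<phi>fun g h by auto
    then show "\<phi> (inv\<^bsub>?BP\<^esub> g) (\<phi> g h) = h"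
      using g h Gc[OF g] Sc[OF h]
      by (simp add: \<phi>_def Bg.m_assoc Bg.inv_cancel_left_nested)
  qed
  have \<phi>Bij: "\<And>g. g \<in> G \<Longrightarrow> \<phi> g \<in> Bij Soc"
  proof -
    fix g assume g: "g \<in> G"
    have "bij_betw (\<phi> g) Soc Soc"
    proof (rule bij_betwI[where g = "\<phi> (inv\<^bsub>?BP\<^esub> g)"])
      show "\<phi> g \<in> Soc \<rightarrow> Soc" using \<phi>fun g .
      show "\<phi> (inv\<^bsub>?BP\<^esub> g) \<in> Soc \<rightarrow> Soc" using \<phi>fun invG g by blast
      show "\<And>h. h \<in> Soc \<Longrightarrow> \<phi> (inv\<^bsub>?BP\<^esub> g) (\<phi> g h) = h" using \<phi>inv g by blast
      show "\<And>h. h \<in> Soc \<Longrightarrow> \<phi> g (\<phi> (inv\<^bsub>?BP\<^esub> g) h) = h"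
        using \<phi>inv[OF invG[OF g]] g Gc[OF g] by simp
    qed
    then show "\<phi> g \<in> Bij Soc" by (simp add: Bij_def \<phi>_def)
  qed
  have hom1: "group_hom ?Gm (BijGroup Soc) \<phi>"
    unfolding group_hom_def group_hom_axioms_def
  proof (intro conjI)
    show "group ?Gm" using subgroup.subgroup_is_group[OF GB Bg.is_group] .
    show "group (BijGroup Soc)" by (rule group_BijGroup)
    show "\<phi> \<in> hom ?Gm (BijGroup Soc)"
      using \<phi>Bij \<phi>comp Gc by (auto simp: hom_def BP_carrier BP_mult)
  qed
  have img: "subgroup (\<phi> ` G) (BijGroup Soc)"
    using group_hom.img_is_subgroup[OF hom1] by simp
  have grS: "group ?S" using subgroup.subgroup_is_group[OF SB Bg.is_group] .
  have \<phi>auto: "\<phi> ` G \<subseteq> auto ?S"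
  proof
    fix f assume "f \<in> \<phi> ` G"
    then obtain g where g: "g \<in> G" "f = \<phi> g" by auto
    have "\<phi> g \<in> hom ?S ?S"
    proof (rule homI)
      show "\<And>h. h \<in> carrier ?S \<Longrightarrow> \<phi> g h \<in> carrier ?S" using \<phi>fun g by auto
      fix h1 h2 assume h1: "h1 \<in> carrier ?S" and h2: "h2 \<in> carrier ?S"
      have "h1 \<otimes>\<^bsub>?BP\<^esub> h2 \<in> Soc" using subgroup.m_closed[OF SB] h1 h2 by simp
      then show "\<phi> g (h1 \<otimes>\<^bsub>?S\<^esub> h2) = \<phi> g h1 \<otimes>\<^bsub>?S\<^esub> \<phi> g h2"
        using h1 h2 Gc[OF g(1)] Sc
        by (simp add: \<phi>_def Bg.m_assoc Bg.inv_cancel_left_nested)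
    qed
    then show "f \<in> auto ?S" using \<phi>Bij g by (simp add: auto_def)
  qed
  have AG: "AutoGroup ?S = BijGroup Soc\<lparr>carrier := auto ?S\<rparr>" by (simp add: AutoGroup_def)
  have autoB: "subgroup (auto ?S) (BijGroup Soc)"
  proof -
    interpret BS: group "BijGroup Soc" by (rule group_BijGroup)
    have "auto ?S \<subseteq> carrier (BijGroup Soc)" by (auto simp: auto_def BP_carrier)
    moreover have "group (BijGroup Soc\<lparr>carrier := auto ?S\<rparr>)"
      using group.AutoGroup[OF grS] AG by simp
    ultimately show ?thesis by (rule BS.group_incl_imp_subgroup)
  qed
  have imgA: "subgroup (\<phi> ` G) (AutoGroup ?S)"
  proof -
    interpret BS: group "BijGroup Soc" by (rule group_BijGroup)
    show ?thesis unfolding AG by (rule BS.subgroup_incl[OF img autoB \<phi>auto])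
  qed
  have "card (rcosets\<^bsub>AutoGroup ?S\<^esub> (\<phi> ` G)) * card (\<phi> ` G) = order (AutoGroup ?S)"
    using group.lagrange[OF group.AutoGroup[OF grS] imgA] .
  then have "card (auto ?S) = card (rcosets\<^bsub>AutoGroup ?S\<^esub> (\<phi> ` G)) * card (\<phi> ` G)"
    by (simp add: AG order_def)
  then obtain a where a: "card (auto ?S) = a * card (\<phi> ` G)" by blast
  have injG: "inj_on \<phi> G"
  proof
    fix g g' assume g: "g \<in> G" and g': "g' \<in> G" and e: "\<phi> g = \<phi> g'"
    define d where "d = inv\<^bsub>?BP\<^esub> g' \<otimes>\<^bsub>?BP\<^esub> g"
    have dG: "d \<in> G" using d_def invG mG g g' by blast
    have "\<forall>h\<in>Soc. d \<otimes>\<^bsub>?BP\<^esub> h \<otimes>\<^bsub>?BP\<^esub> inv\<^bsub>?BP\<^esub> d = h"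
    proof
      fix h assume h: "h \<in> Soc"
      have "\<phi> g h = \<phi> g' h" using e by simp
      then have "g \<otimes>\<^bsub>?BP\<^esub> h \<otimes>\<^bsub>?BP\<^esub> inv\<^bsub>?BP\<^esub> g = g' \<otimes>\<^bsub>?BP\<^esub> h \<otimes>\<^bsub>?BP\<^esub> inv\<^bsub>?BP\<^esub> g'"
        using h by (simp add: \<phi>_def)
      then have "inv\<^bsub>?BP\<^esub> g' \<otimes>\<^bsub>?BP\<^esub> (g \<otimes>\<^bsub>?BP\<^esub> h \<otimes>\<^bsub>?BP\<^esub> inv\<^bsub>?BP\<^esub> g) \<otimes>\<^bsub>?BP\<^esub> g' = inv\<^bsub>?BP\<^esub> g' \<otimes>\<^bsub>?BP\<^esub> (g' \<otimes>\<^bsub>?BP\<^esub> h \<otimes>\<^bsub>?BP\<^esub> inv\<^bsub>?BP\<^esub> g') \<otimes>\<^bsub>?BP\<^esub> g'"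
        by simp
      then show "d \<otimes>\<^bsub>?BP\<^esub> h \<otimes>\<^bsub>?BP\<^esub> inv\<^bsub>?BP\<^esub> d = h"
        using Gc[OF g] Gc[OF g'] Sc[OF h]
        by (simp add: d_def Bg.m_assoc Bg.inv_mult_group Bg.inv_cancel_left_nested)
    qed
    then have "d = \<one>\<^bsub>?BP\<^esub>" using faith' dG by blast
    then show "g = g'" using Gc[OF g] Gc[OF g'] unfolding d_def
      by (metis Bg.cancel_inv_left_nested Bg.r_one)
  qed
  have innS: "inn_auts ?S = \<phi> ` Soc"
    unfolding inn_auts_def
  proof (rule image_cong)
    show "carrier ?S = Soc" by simp
  next
    fix g assume g: "g \<in> Soc"
    then have "m_inv ?S g = inv\<^bsub>?BP\<^esub> g" using Bg.m_inv_consistent[OF SB] by simp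
    then show "restrict (\<lambda>y. monoid.mult ?S (monoid.mult ?S g y) (m_inv ?S g)) (carrier ?S) = \<phi> g"
      by (simp add: \<phi>_def)
  qed
  have cG: "card (\<phi> ` G) = card G" using injG by (simp add: card_image)
  have cS: "card (inn_auts ?S) = card Soc" using innS inj_on_subset[OF injG SG] by (simp add: card_image)
  have "card Soc dvd card G" using lagr_perm[OF SB GB SG] .
  then obtain t where t: "card G = t * card Soc" by (metis dvd_div_mult_self)
  have "G \<subseteq> Bij P" using Gc by (auto simp: BP_carrier)
  then have fG: "finite G" using finite_Bij[OF fP] by (rule finite_subset)
  have "card Soc > 0"
  proof -
    have "finite Soc" using fG SG finite_subset by blast
    moreover have "\<one>\<^bsub>?BP\<^esub> \<in> Soc" using subgroup.one_closed[OF SB] .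
    ultimately show ?thesis by (auto simp: card_gt_0_iff)
  qed
  then have "out_order ?S = a * t"
    unfolding out_order_def order_def using a cG cS t by (simp add: AG)
  then show ?thesis using t by auto
qed

lemma arith_final:
  fixes a b s :: nat
  assumes a: "0 < a" and d: "a dvd b * s"
  shows "a div gcd a b dvd s"
proof -
  define g where "g = gcd a b"
  have g0: "g > 0" using a by (simp add: g_def)
  obtain a' where a': "a = a' * g" using g_def by (metis dvd_div_mult_self gcd_dvd1)
  obtain b' where b': "b = b' * g" using g_def by (metis dvd_div_mult_self gcd_dvd2)
  have ad: "a div g = a'" using a' g0 by simp
  have bd: "b div g = b'" using b' g0 by simp
  have cop: "coprime a' b'" using div_gcd_coprime[of a b] a ad bd g_def by simp
  have "a' * g dvd (b' * s) * g" using d a' b' by (simp add: ac_simps)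
  then have "a' dvd b' * s" using g0 by simp
  then have "a' dvd s" using cop coprime_dvd_mult_right_iff by blast
  then show ?thesis using ad g_def by simp
qed

lemma app_mult: "f1 \<in> carrier (BijGroup P) \<Longrightarrow> f2 \<in> carrier (BijGroup P) \<Longrightarrow> z \<in> P \<Longrightarrow>
   (f1 \<otimes>\<^bsub>BijGroup P\<^esub> f2) z = f1 (f2 z)"
  by (simp add: BP_mult BP_carrier compose_def)

lemma normal_conj:
  assumes GB: "subgroup G (BijGroup P)" and N: "Soc \<lhd> (BijGroup P\<lparr>carrier := G\<rparr>)"
    and g: "g \<in> G" and h: "h \<in> Soc"
  shows "g \<otimes>\<^bsub>BijGroup P\<^esub> h \<otimes>\<^bsub>BijGroup P\<^esub> inv\<^bsub>BijGroup P\<^esub> g \<in> Soc"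
proof -
  interpret Bg: group "BijGroup P" by (rule group_BijGroup)
  have "g \<otimes>\<^bsub>BijGroup P\<lparr>carrier := G\<rparr>\<^esub> h \<otimes>\<^bsub>BijGroup P\<lparr>carrier := G\<rparr>\<^esub> inv\<^bsub>BijGroup P\<lparr>carrier := G\<rparr>\<^esub> g \<in> Soc"
    using normal.inv_op_closed2[OF N] g h by simp
  then show ?thesis using Bg.m_inv_consistent[OF GB g] by simp
qed

lemma orbit_conj:
  assumes GB: "subgroup G (BijGroup P)" and N: "Soc \<lhd> (BijGroup P\<lparr>carrier := G\<rparr>)"
    and g: "g \<in> G" and x: "x \<in> P"
  shows "(\<lambda>h. h (g x)) ` Soc = g ` ((\<lambda>h. h x) ` Soc)"
proof -
  interpret Bg: group "BijGroup P" by (rule group_BijGroup)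
  have SG: "Soc \<subseteq> G" using subgroup.subset[OF normal_imp_subgroup[OF N]] by simp
  have Gc: "\<And>g. g \<in> G \<Longrightarrow> g \<in> carrier (BijGroup P)" using subgroup.subset[OF GB] by auto
  have Sc: "\<And>g. g \<in> Soc \<Longrightarrow> g \<in> carrier (BijGroup P)" using SG Gc by auto
  have ig: "inv\<^bsub>BijGroup P\<^esub> g \<in> G" using subgroup.m_inv_closed[OF GB g] .
  have gP: "g x \<in> P" using Gc[OF g] x by (auto simp: BP_carrier dest: Bij_imp_funcset)
  show ?thesis
  proof
    show "(\<lambda>h. h (g x)) ` Soc \<subseteq> g ` (\<lambda>h. h x) ` Soc"
    proof
      fix z assume "z \<in> (\<lambda>h. h (g x)) ` Soc"
      then obtain h where h: "h \<in> Soc" "z = h (g x)" by auto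
      define h'' where "h'' = inv\<^bsub>BijGroup P\<^esub> g \<otimes>\<^bsub>BijGroup P\<^esub> h \<otimes>\<^bsub>BijGroup P\<^esub> inv\<^bsub>BijGroup P\<^esub> (inv\<^bsub>BijGroup P\<^esub> g)"
      have h''S: "h'' \<in> Soc" unfolding h''_def using normal_conj[OF GB N ig h(1)] .
      have "g \<otimes>\<^bsub>BijGroup P\<^esub> h'' = h \<otimes>\<^bsub>BijGroup P\<^esub> g"
        unfolding h''_def using Gc[OF g] Sc[OF h(1)]
        by (simp add: Bg.m_assoc Bg.cancel_inv_left_nested)
      then have "(g \<otimes>\<^bsub>BijGroup P\<^esub> h'') x = (h \<otimes>\<^bsub>BijGroup P\<^esub> g) x" by simp
      then have "g (h'' x) = h (g x)" using app_mult Gc[OF g] Sc[OF h(1)] Sc[OF h''S] x by metis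
      then show "z \<in> g ` (\<lambda>h. h x) ` Soc" using h h''S by (metis image_eqI)
    qed
  next
    show "g ` (\<lambda>h. h x) ` Soc \<subseteq> (\<lambda>h. h (g x)) ` Soc"
    proof
      fix z assume "z \<in> g ` (\<lambda>h. h x) ` Soc"
      then obtain h where h: "h \<in> Soc" "z = g (h x)" by auto
      define h' where "h' = g \<otimes>\<^bsub>BijGroup P\<^esub> h \<otimes>\<^bsub>BijGroup P\<^esub> inv\<^bsub>BijGroup P\<^esub> g"
      have h'S: "h' \<in> Soc" unfolding h'_def using normal_conj[OF GB N g h(1)] .
      have "h' \<otimes>\<^bsub>BijGroup P\<^esub> g = g \<otimes>\<^bsub>BijGroup P\<^esub> h"
        unfolding h'_def using Gc[OF g] Sc[OF h(1)]
        by (simp add: Bg.m_assoc)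
      then have "(h' \<otimes>\<^bsub>BijGroup P\<^esub> g) x = (g \<otimes>\<^bsub>BijGroup P\<^esub> h) x" by simp
      then have "h' (g x) = g (h x)" using app_mult Gc[OF g] Sc[OF h(1)] Sc[OF h'S] x by metis
      then show "z \<in> (\<lambda>h. h (g x)) ` Soc" using h h'S by (metis image_eqI)
    qed
  qed
qed

lemma perm_action:
  assumes H: "subgroup H (BijGroup P)"
  shows "group_action (BijGroup P\<lparr>carrier := H\<rparr>) P (\<lambda>h. h)"
proof -
  have gB: "group (BijGroup P)" by (rule group_BijGroup)
  have gH: "group (BijGroup P\<lparr>carrier := H\<rparr>)"
    using subgroup.subgroup_is_group[OF H gB] .
  have "group_hom (BijGroup P\<lparr>carrier := H\<rparr>) (BijGroup P) (\<lambda>h. h)"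
    unfolding group_hom_def group_hom_axioms_def
    using gH gB subgroup.subset[OF H] by (auto simp: hom_def)
  then show ?thesis by (simp add: group_action_def)
qed

lemma orbit_count:
  assumes fP: "finite P" and GB: "subgroup G (BijGroup P)" and N: "Soc \<lhd> (BijGroup P\<lparr>carrier := G\<rparr>)"
    and x: "x \<in> P" and tr: "\<forall>z\<in>P. \<exists>g\<in>G. g x = z"
  shows "card ((\<lambda>h. h x) ` Soc) dvd card P"
proof -
  interpret Bg: group "BijGroup P" by (rule group_BijGroup)
  have SB: "subgroup Soc (BijGroup P)"
    using Bg.incl_subgroup[OF GB normal_imp_subgroup[OF N]] .
  interpret ga: group_action "BijGroup P\<lparr>carrier := Soc\<rparr>" P "\<lambda>h. h" by (rule perm_action[OF SB])
  let ?S = "BijGroup P\<lparr>carrier := Soc\<rparr>"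
  have Gc: "\<And>g. g \<in> G \<Longrightarrow> g \<in> Bij P" using subgroup.subset[OF GB] by (auto simp: BP_carrier)
  have xO: "(\<lambda>h. h x) ` Soc \<subseteq> P"
    using subgroup.subset[OF SB] x by (auto simp: BP_carrier dest: Bij_imp_funcset)
  have cc: "\<And>orb. orb \<in> orbits ?S P (\<lambda>h. h) \<Longrightarrow> card orb = card ((\<lambda>h. h x) ` Soc)"
  proof -
    fix orb assume "orb \<in> orbits ?S P (\<lambda>h. h)"
    then obtain z where z: "z \<in> P" "orb = orbit ?S (\<lambda>h. h) z" by (auto simp: orbits_def)
    obtain g where g: "g \<in> G" "g x = z" using tr z(1) by blast
    have "orb = (\<lambda>h. h (g x)) ` Soc" using z g by (auto simp: orbit_def)
    also have "\<dots> = g ` ((\<lambda>h. h x) ` Soc)" using orbit_conj[OF GB N g(1) x] .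
    finally have e: "orb = g ` ((\<lambda>h. h x) ` Soc)" .
    have "inj_on g ((\<lambda>h. h x) ` Soc)" using Bij_inj[OF Gc[OF g(1)]] xO by (rule inj_on_subset)
    then show "card orb = card ((\<lambda>h. h x) ` Soc)" using e by (simp add: card_image)
  qed
  have "(\<Sum>orb\<in>orbits ?S P (\<lambda>h. h). \<Sum>z\<in>orb. (1::nat)) = (\<Sum>z\<in>P. 1)"
    using ga.disjoint_sum[OF fP] .
  moreover have "(\<Sum>orb\<in>orbits ?S P (\<lambda>h. h). \<Sum>z\<in>orb. (1::nat)) = (\<Sum>orb\<in>orbits ?S P (\<lambda>h. h). card ((\<lambda>h. h x) ` Soc))"
    by (rule sum.cong) (simp_all add: cc)
  ultimately have "card P = card (orbits ?S P (\<lambda>h. h)) * card ((\<lambda>h. h x) ` Soc)" by simp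
  then show ?thesis by simp
qed

theorem lemma3p5:
  fixes P :: "'a set" and B :: "'a set set" and k lam :: nat
    and G Soc :: "('a \<Rightarrow> 'a) set"
  assumes "nontrivial_design_2 P B (k\<^sup>2) k lam"
    and "lam dvd k"
    and "design_aut_group P B G"
    and "flag_transitive P B G"
    and "almost_simple_with_socle ((BijGroup P)\<lparr>carrier := G\<rparr>) Soc"
  shows "\<forall>x\<in>P. \<forall>y\<in>P. y \<noteq> x \<longrightarrow>
     ((k + 1) div gcd (k + 1) (out_order ((BijGroup P)\<lparr>carrier := Soc\<rparr>)))
        dvd card ((\<lambda>h. h y) ` {h \<in> Soc. h x = x}) \<and>
     ((k + 1) div gcd (k + 1) (out_order ((BijGroup P)\<lparr>carrier := Soc\<rparr>)))
        dvd card {h \<in> Soc. h x = x}"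
proof (intro ballI impI)
  fix x y assume x: "x \<in> P" and y: "y \<in> P" and yx: "y \<noteq> x"
  interpret Bg: group "BijGroup P" by (rule group_BijGroup)
  have D: "design_2 P B (k\<^sup>2) k lam" and k: "2 < k"
    using assms(1) by (auto simp: nontrivial_design_2_def)
  have fP: "finite P" and lm: "\<forall>x\<in>P. \<forall>y\<in>P. x \<noteq> y \<longrightarrow> card {b\<in>B. x \<in> b \<and> y \<in> b} = lam"
    using D by (auto simp: design_2_def)
  have lam: "0 < lam" using assms(2) k by (cases "lam = 0") auto
  have GB: "subgroup G (BijGroup P)" and GBl: "\<forall>g\<in>G. \<forall>b\<in>B. g ` b \<in> B"
    using assms(3) by (auto simp: design_aut_group_def)
  have ft: "\<And>x b y c. x \<in> P \<Longrightarrow> b \<in> B \<Longrightarrow> x \<in> b \<Longrightarrow> y \<in> P \<Longrightarrow> c \<in> B \<Longrightarrow> y \<in> c \<Longrightarrow> \<exists>g\<in>G. g x = y \<and> g ` b = c"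
    using assms(4) unfolding flag_transitive_def by blast
  have N: "Soc \<lhd> (BijGroup P\<lparr>carrier := G\<rparr>)" and
    faith: "\<forall>g\<in>carrier (BijGroup P\<lparr>carrier := G\<rparr>). (\<forall>h\<in>Soc. monoid.mult (BijGroup P\<lparr>carrier := G\<rparr>) (monoid.mult (BijGroup P\<lparr>carrier := G\<rparr>) g h) (m_inv (BijGroup P\<lparr>carrier := G\<rparr>) g) = h) \<longrightarrow> g = monoid.one (BijGroup P\<lparr>carrier := G\<rparr>)"
    using assms(5) unfolding almost_simple_with_socle_def by blast+
  obtain t where t: "card G = t * card Soc" and tdvd: "t dvd out_order (BijGroup P\<lparr>carrier := Soc\<rparr>)"
    using socle_index_dvd_out[OF fP GB N faith] by blast
  have SB: "subgroup Soc (BijGroup P)"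
    using Bg.incl_subgroup[OF GB normal_imp_subgroup[OF N]] .
  have SG: "Soc \<subseteq> G" using subgroup.subset[OF normal_imp_subgroup[OF N]] by simp
  have onblock: "\<And>p. p \<in> P \<Longrightarrow> \<exists>b\<in>B. p \<in> b"
  proof -
    fix p assume p: "p \<in> P"
    obtain q where q: "q \<in> P" "q \<noteq> p" using x y yx by (metis)
    have "card {b\<in>B. p \<in> b \<and> q \<in> b} = lam" using lm p q by auto
    then have "{b\<in>B. p \<in> b \<and> q \<in> b} \<noteq> {}" using lam by (metis card.empty less_irrefl)
    then show "\<exists>b\<in>B. p \<in> b" by auto
  qed
  have tr: "\<forall>z\<in>P. \<exists>g\<in>G. g x = z"
  proof
    fix z assume z: "z \<in> P"
    obtain b where b: "b \<in> B" "x \<in> b" using onblock[OF x] by blast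
    obtain c where c: "c \<in> B" "z \<in> c" using onblock[OF z] by blast
    show "\<exists>g\<in>G. g x = z" using ft[OF x b z c] by blast
  qed
  define Gx where "Gx = {g\<in>G. g x = x}"
  define Xx where "Xx = {h\<in>Soc. h x = x}"
  define Gxy where "Gxy = {g\<in>Gx. g y = y}"
  define Xxy where "Xxy = {h\<in>Xx. h y = y}"
  have GxB: "subgroup Gx (BijGroup P)" unfolding Gx_def using stab_subgroup[OF GB x] .
  have XxB: "subgroup Xx (BijGroup P)" unfolding Xx_def using stab_subgroup[OF SB x] .
  have GxyB: "subgroup Gxy (BijGroup P)" unfolding Gxy_def using stab_subgroup[OF GxB y] .
  have XxyB: "subgroup Xxy (BijGroup P)" unfolding Xxy_def using stab_subgroup[OF XxB y] .
  have "Xxy \<subseteq> Gxy" using SG unfolding Xxy_def Gxy_def Xx_def Gx_def by auto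
  then obtain e where e: "card Gxy = e * card Xxy" using lagr_perm[OF XxyB GxyB] by (metis dvd_div_mult_self)
  define Orb where "Orb = (\<lambda>h. h y) ` Gx"
  define s where "s = card ((\<lambda>h. h y) ` Xx)"
  have kO: "(k + 1) dvd card Orb" unfolding Orb_def
  proof (rule design_orbit_dvd[OF D k lam x y yx GxB])
    show "\<forall>h\<in>Gx. h x = x" by (simp add: Gx_def)
    show "\<forall>h\<in>Gx. \<forall>b\<in>B. h ` b \<in> B" using GBl by (simp add: Gx_def)
    show "\<forall>b\<in>B. \<forall>c\<in>B. x \<in> b \<longrightarrow> x \<in> c \<longrightarrow> (\<exists>h\<in>Gx. h ` b = c)"
      using ft x by (fastforce simp: Gx_def)
  qed
  have os1: "card Orb * card Gxy = card Gx" unfolding Orb_def Gxy_def using os_perm[OF GxB y] .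
  have os2: "s * card Xxy = card Xx" unfolding s_def Xxy_def using os_perm[OF XxB y] .
  have osG: "card ((\<lambda>h. h x) ` G) * card Gx = card G" unfolding Gx_def using os_perm[OF GB x] .
  have "(\<lambda>h. h x) ` G = P"
  proof
    show "(\<lambda>h. h x) ` G \<subseteq> P" using subgroup.subset[OF GB] x
      by (auto simp: BP_carrier dest: Bij_imp_funcset)
    show "P \<subseteq> (\<lambda>h. h x) ` G" using tr by auto
  qed
  then have osG': "card P * card Gx = card G" using osG by simp
  define c where "c = card ((\<lambda>h. h x) ` Soc)"
  have osX: "c * card Xx = card Soc" unfolding c_def Xx_def using os_perm[OF SB x] .
  obtain Nn where Nn: "card P = Nn * c"
    using orbit_count[OF fP GB N x tr] unfolding c_def by (metis dvd_div_mult_self)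
  have c0: "c > 0"
  proof -
    have "(\<lambda>h. h x) ` Soc \<subseteq> P" using subgroup.subset[OF SB] x
      by (auto simp: BP_carrier dest: Bij_imp_funcset)
    then have "finite ((\<lambda>h. h x) ` Soc)" using fP finite_subset by blast
    moreover have "\<one>\<^bsub>BijGroup P\<^esub> \<in> Soc" using subgroup.one_closed[OF SB] .
    ultimately show ?thesis unfolding c_def by (auto simp: card_gt_0_iff)
  qed
  have fXxy: "finite Xxy"
  proof -
    have "Xxy \<subseteq> Bij P" using subgroup.subset[OF XxyB] by (simp add: BP_carrier)
    then show ?thesis using finite_Bij[OF fP] by (rule finite_subset)
  qed
  have Xxy0: "card Xxy > 0"
  proof -
    have "\<one>\<^bsub>BijGroup P\<^esub> \<in> Xxy" using subgroup.one_closed[OF XxyB] .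
    then show ?thesis using fXxy by (auto simp: card_gt_0_iff)
  qed
  have "c * (t * card Xx) = c * (Nn * card Gx)"
  proof -
    have "t * (c * card Xx) = Nn * c * card Gx" using t osX osG' Nn by simp
    then show ?thesis by (simp add: ac_simps)
  qed
  then have "t * card Xx = Nn * card Gx" using c0 by simp
  then have tx: "t * card Xx = Nn * card Gx" .
  have "t * s * card Xxy = t * card Xx" using os2 by (simp only: mult.assoc)
  also have "\<dots> = Nn * card Gx" by (rule tx)
  also have "card Gx = card Orb * (e * card Xxy)" using os1 e by simp
  finally have "t * s * card Xxy = Nn * e * card Orb * card Xxy" by (simp only: ac_simps)
  then have ts: "t * s = Nn * e * card Orb" using Xxy0 by simp
  have "card Orb dvd t * s" using ts by simp
  then have "(k + 1) dvd t * s" using kO by (rule dvd_trans[rotated])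
  then have "(k + 1) dvd out_order (BijGroup P\<lparr>carrier := Soc\<rparr>) * s"
    using tdvd by (meson dvd_trans mult_dvd_mono dvd_refl)
  then have main: "((k + 1) div gcd (k + 1) (out_order (BijGroup P\<lparr>carrier := Soc\<rparr>))) dvd s"
    by (intro arith_final) auto
  have "s dvd card Xx" using os2 by (metis dvd_triv_left)
  then show "((k + 1) div gcd (k + 1) (out_order (BijGroup P\<lparr>carrier := Soc\<rparr>)))
        dvd card ((\<lambda>h. h y) ` {h \<in> Soc. h x = x}) \<and>
     ((k + 1) div gcd (k + 1) (out_order (BijGroup P\<lparr>carrier := Soc\<rparr>)))
        dvd card {h \<in> Soc. h x = x}"
    using main dvd_trans unfolding s_def Xx_def by blast
qed

end
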